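(* Let $\lambda_1,\lambda_2,\sigma_1,\sigma_2\in\mathbb{C}^*$ and $\eta_1,\eta_2\in\mathbb{C}$ with $\lambda_1\neq\lambda_2$. Then the $\mathcal{G}$-submodule of $\Omega(\lambda_1,\eta_1,\sigma_1,0)\otimes\Omega(\lambda_2,\eta_2,\sigma_2,0)$ generated by $1\otimes 1$ is the whole module $\Omega(\lambda_1,\eta_1,\sigma_1,0)\otimes\Omega(\lambda_2,\eta_2,\sigma_2,0)$.
   Context: The planar Galilean conformal algebra $\mathcal{G}$ is the complex Lie algebra with basis $\{L_m,H_m,I_m,J_m\mid m\in\mathbb{Z}\}$ and brackets $[L_m,L_n]=(n-m)L_{m+n}$, $[L_m,H_n]=nH_{m+n}$, $[L_m,I_n]=(n-m)I_{m+n}$, $[L_m,J_n]=(n-m)J_{m+n}$, $[H_m,I_n]=I_{m+n}$, $[H_m,J_n]=-J_{m+n}$, and $[H_m,H_n]=[I_m,I_n]=[J_m,J_n]=[I_m,J_n]=0$ for all $m,n\in\mathbb{Z}$. For $\lambda,\sigma\in\mathbb{C}^*$, $\eta\in\mathbb{C}$, the module $\Omega(\lambda,\eta,\sigma,0)$ is a polynomial algebra $\mathbb{C}[X,Y]$ with $L_m f(X,Y)=\lambda^m(Y-mX+m\eta)f(X,Y-m)$, $H_m f(X,Y)=\lambda^m X f(X,Y-m)$, $I_m f(X,Y)=\lambda^m\sigma f(X-1,Y-m)$, $J_m f(X,Y)=0$. The tensor product of $\mathcal{G}$-modules has action $x(v\otimes w)=xv\otimes w+v\otimes xw$. *)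

theory Defs
  imports Complex_Main
begin

datatype gbasis = L int | H int | I int | J int

text \<open>Polynomials in C[X,Y] represented as polynomial functions (faithful, C infinite).
  A point is (X,Y).\<close>
definition poly2 :: "(complex \<times> complex \<Rightarrow> complex) \<Rightarrow> bool" where
  "poly2 f \<longleftrightarrow> (\<exists>(n::nat) c. f = (\<lambda>(x,y). \<Sum>i\<le>n. \<Sum>j\<le>n. c i j * x ^ i * y ^ j))"

fun omega_act :: "complex \<Rightarrow> complex \<Rightarrow> complex \<Rightarrow> gbasis
    \<Rightarrow> (complex \<times> complex \<Rightarrow> complex) \<Rightarrow> (complex \<times> complex \<Rightarrow> complex)" where
  "omega_act lam eta sig (L m) f =
     (\<lambda>(x,y). lam powi m * (y - of_int m * x + of_int m * eta) * f (x, y - of_int m))"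
| "omega_act lam eta sig (H m) f = (\<lambda>(x,y). lam powi m * x * f (x, y - of_int m))"
| "omega_act lam eta sig (I m) f = (\<lambda>(x,y). lam powi m * sig * f (x - 1, y - of_int m))"
| "omega_act lam eta sig (J m) f = (\<lambda>_. 0)"

text \<open>The tensor product C[X,Y] (x) C[X,Y], realised as functions F p q that are
  finite sums of products f_i(p) g_i(q) of polynomials.\<close>
definition tensor_space :: "(complex \<times> complex \<Rightarrow> complex \<times> complex \<Rightarrow> complex) set" where
  "tensor_space = {F. \<exists>(n::nat) f g. (\<forall>i<n. poly2 (f i) \<and> poly2 (g i)) \<and>
                         F = (\<lambda>p q. \<Sum>i<n. f i p * g i q)}"

definition tensor_act ::
  "complex \<Rightarrow> complex \<Rightarrow> complex \<Rightarrow> complex \<Rightarrow> complex \<Rightarrow> complex \<Rightarrow> gbasis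
   \<Rightarrow> (complex \<times> complex \<Rightarrow> complex \<times> complex \<Rightarrow> complex)
   \<Rightarrow> (complex \<times> complex \<Rightarrow> complex \<times> complex \<Rightarrow> complex)" where
  "tensor_act l1 e1 s1 l2 e2 s2 b F =
     (\<lambda>p q. omega_act l1 e1 s1 b (\<lambda>p'. F p' q) p + omega_act l2 e2 s2 b (\<lambda>q'. F p q') q)"

type_synonym tvec = "complex \<times> complex \<Rightarrow> complex \<times> complex \<Rightarrow> complex"

inductive_set gen_submodule ::
  "(gbasis \<Rightarrow> tvec \<Rightarrow> tvec) \<Rightarrow> tvec \<Rightarrow> tvec set" for act v where
  base: "v \<in> gen_submodule act v"
| zero: "(\<lambda>p q. 0) \<in> gen_submodule act v"
| add: "a \<in> gen_submodule act v \<Longrightarrow> b \<in> gen_submodule act v \<Longrightarrow>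
          (\<lambda>p q. a p q + b p q) \<in> gen_submodule act v"
| smult: "a \<in> gen_submodule act v \<Longrightarrow> (\<lambda>p q. c * a p q) \<in> gen_submodule act v"
| act: "a \<in> gen_submodule act v \<Longrightarrow> act x a \<in> gen_submodule act v"

end

theory Submission imports Defs begin

lemma sum_concat: "(\<Sum>i<n+m. h i) = (\<Sum>i<n. h i) + (\<Sum>i<m. h (n+i))" for h :: "nat \<Rightarrow> 'a::comm_monoid_add"
  by (induction m) (simp_all add: add.assoc)

lemma poly2_const: "poly2 (\<lambda>_. c)"
  unfolding poly2_def by (rule exI[of _ 0], rule exI[of _ "\<lambda>i j. c"]) auto

lemma poly2_smult: "poly2 f \<Longrightarrow> poly2 (\<lambda>z. a * f z)"
  unfolding poly2_def
  apply clarify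
  subgoal for n c
    apply (rule exI[of _ n], rule exI[of _ "\<lambda>i j. a * c i j"])
    by (auto simp: sum_distrib_left mult.assoc)
  done

lemma shiftx: "(\<Sum>i\<le>Suc n. \<Sum>j\<le>Suc n. (if i = 0 \<or> j > n then 0 else c (i - 1) j) * a ^ i * (b::complex) ^ j)
   = (\<Sum>i\<le>n. \<Sum>j\<le>n. c i j * a ^ Suc i * b ^ j)"
proof -
  have "\<And>i. (\<Sum>j\<le>Suc n. (if i = 0 \<or> j > n then 0 else c (i - 1) j) * a ^ i * b ^ j)
      = (if i = 0 then 0 else (\<Sum>j\<le>n. c (i - 1) j * a ^ i * b ^ j))"
    by (auto intro: sum.cong)
  then show ?thesis by (simp only: sum.atMost_Suc_shift) simp
qed

lemma shifty: "(\<Sum>i\<le>Suc n. \<Sum>j\<le>Suc n. (if j = 0 \<or> i > n then 0 else c i (j - 1)) * a ^ i * (b::complex) ^ j)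
   = (\<Sum>i\<le>n. \<Sum>j\<le>n. c i j * a ^ i * b ^ Suc j)"
proof -
  have "\<And>i. (\<Sum>j\<le>Suc n. (if j = 0 \<or> i > n then 0 else c i (j - 1)) * a ^ i * b ^ j)
      = (if i > n then 0 else (\<Sum>j\<le>n. c i j * a ^ i * b ^ Suc j))"
    by (simp only: sum.atMost_Suc_shift) simp
  then show ?thesis by (simp add: sum.atMost_Suc)
qed

lemma poly2_x: "poly2 f \<Longrightarrow> poly2 (\<lambda>z. fst z * f z)"
  unfolding poly2_def
  apply clarify
  subgoal for n c
    apply (rule exI[of _ "Suc n"], rule exI[of _ "\<lambda>i j. if i = 0 \<or> j > n then 0 else c (i - 1) j"])
    apply (rule ext, clarsimp simp only: shiftx split_beta fst_conv snd_conv)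
    apply (simp add: sum_distrib_left mult_ac)
    done
  done

lemma poly2_y: "poly2 f \<Longrightarrow> poly2 (\<lambda>z. snd z * f z)"
  unfolding poly2_def
  apply clarify
  subgoal for n c
    apply (rule exI[of _ "Suc n"], rule exI[of _ "\<lambda>i j. if j = 0 \<or> i > n then 0 else c i (j - 1)"])
    apply (rule ext, clarsimp simp only: shifty split_beta fst_conv snd_conv)
    apply (simp add: sum_distrib_left mult_ac)
    done
  done


lemma ts_intro: "(\<forall>i<(n::nat). poly2 (f i) \<and> poly2 (g i)) \<Longrightarrow> (\<And>p q. F p q = (\<Sum>i<n. f i p * g i q)) \<Longrightarrow> F \<in> tensor_space"
  unfolding tensor_space_def by blast

lemma ts_elim:
  assumes "F \<in> tensor_space"
  obtains n f g where "\<forall>i<(n::nat). poly2 (f i) \<and> poly2 (g i)" "F = (\<lambda>p q. \<Sum>i<n. f i p * g i q)"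
  using assms unfolding tensor_space_def by blast

lemma ts_const: "(\<lambda>p q. c) \<in> tensor_space"
  by (rule ts_intro[of "Suc 0" "\<lambda>_ _. c" "\<lambda>_ _. 1"]) (auto simp: poly2_const)

lemma ts_add:
  assumes "F \<in> tensor_space" "G \<in> tensor_space"
  shows "(\<lambda>p q. F p q + G p q) \<in> tensor_space"
proof -
  obtain n f g where 1: "\<forall>i<(n::nat). poly2 (f i) \<and> poly2 (g i)" "F = (\<lambda>p q. \<Sum>i<n. f i p * g i q)"
    using assms(1) by (rule ts_elim)
  obtain m f' g' where 2: "\<forall>i<(m::nat). poly2 (f' i) \<and> poly2 (g' i)" "G = (\<lambda>p q. \<Sum>i<m. f' i p * g' i q)"
    using assms(2) by (rule ts_elim)
  show ?thesis
    apply (rule ts_intro[of "n+m" "\<lambda>i. if i < n then f i else f' (i - n)" "\<lambda>i. if i < n then g i else g' (i - n)"])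
    using 1 2 by (auto simp: sum_concat)
qed

lemma ts_smult: "F \<in> tensor_space \<Longrightarrow> (\<lambda>p q. c * F p q) \<in> tensor_space"
  apply (erule ts_elim)
  subgoal for n f g
    by (rule ts_intro[of n "\<lambda>i p. c * f i p" g]) (auto simp: poly2_smult sum_distrib_left mult.assoc)
  done

lemma ts_mul1: "F \<in> tensor_space \<Longrightarrow> v = fst \<or> v = snd \<Longrightarrow> (\<lambda>p q. v p * F p q) \<in> tensor_space"
  apply (erule ts_elim)
  subgoal for n f g
    by (rule ts_intro[of n "\<lambda>i p. v p * f i p" g]) (auto simp: poly2_x poly2_y sum_distrib_left mult.assoc)
  done

lemma ts_mul2: "F \<in> tensor_space \<Longrightarrow> v = fst \<or> v = snd \<Longrightarrow> (\<lambda>p q. v q * F p q) \<in> tensor_space"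
  apply (erule ts_elim)
  subgoal for n f g
    by (rule ts_intro[of n f "\<lambda>i q. v q * g i q"]) (auto simp: poly2_x poly2_y sum_distrib_left mult_ac)
  done

inductive polyd :: "nat \<Rightarrow> tvec \<Rightarrow> bool" where
  const: "polyd n (\<lambda>p q. c)"
| add: "polyd n F \<Longrightarrow> polyd n G \<Longrightarrow> polyd n (\<lambda>p q. F p q + G p q)"
| smult: "polyd n F \<Longrightarrow> polyd n (\<lambda>p q. c * F p q)"
| x1: "polyd n F \<Longrightarrow> polyd (Suc n) (\<lambda>p q. fst p * F p q)"
| y1: "polyd n F \<Longrightarrow> polyd (Suc n) (\<lambda>p q. snd p * F p q)"
| x2: "polyd n F \<Longrightarrow> polyd (Suc n) (\<lambda>p q. fst q * F p q)"
| y2: "polyd n F \<Longrightarrow> polyd (Suc n) (\<lambda>p q. snd q * F p q)"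
| up: "polyd n F \<Longrightarrow> polyd (Suc n) F"

lemma polyd_cong: "polyd n F \<Longrightarrow> (\<And>p q. G p q = F p q) \<Longrightarrow> polyd n G"
proof -
  assume "polyd n F" "\<And>p q. G p q = F p q"
  then have "G = F" by (intro ext) auto
  then show ?thesis using \<open>polyd n F\<close> by simp
qed

lemma polyd_mono: "polyd n F \<Longrightarrow> n \<le> m \<Longrightarrow> polyd m F"
  by (induction m) (auto intro: polyd.up simp: le_Suc_eq)

lemma polyd_ts: "polyd n F \<Longrightarrow> F \<in> tensor_space"
  by (induction rule: polyd.induct)
     (auto intro: ts_const ts_add ts_smult ts_mul1[where v=fst, simplified] ts_mul1[where v=snd, simplified]
        ts_mul2[where v=fst, simplified] ts_mul2[where v=snd, simplified])

lemma polyd_shift1: "polyd n F \<Longrightarrow> polyd n (\<lambda>p q. F (fst p - a, snd p - b) q)"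
proof (induction rule: polyd.induct)
  case (x1 F n)
  show ?case
    by (rule polyd_cong[OF polyd.add[OF polyd.x1[OF x1.IH] polyd.up[OF polyd.smult[OF x1.IH, of "-a"]]]])
       (simp add: algebra_simps)
next
  case (y1 F n)
  show ?case
    by (rule polyd_cong[OF polyd.add[OF polyd.y1[OF y1.IH] polyd.up[OF polyd.smult[OF y1.IH, of "-b"]]]])
       (simp add: algebra_simps)
qed (auto intro: polyd.intros)

lemma polyd_shift2: "polyd n F \<Longrightarrow> polyd n (\<lambda>p q. F p (fst q - a, snd q - b))"
proof (induction rule: polyd.induct)
  case (x2 F n)
  show ?case
    by (rule polyd_cong[OF polyd.add[OF polyd.x2[OF x2.IH] polyd.up[OF polyd.smult[OF x2.IH, of "-a"]]]])
       (simp add: algebra_simps)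
next
  case (y2 F n)
  show ?case
    by (rule polyd_cong[OF polyd.add[OF polyd.y2[OF y2.IH] polyd.up[OF polyd.smult[OF y2.IH, of "-b"]]]])
       (simp add: algebra_simps)
qed (auto intro: polyd.intros)


definition isvar :: "tvec \<Rightarrow> bool" where
  "isvar v \<longleftrightarrow> v = (\<lambda>p q. fst p) \<or> v = (\<lambda>p q. snd p) \<or> v = (\<lambda>p q. fst q) \<or> v = (\<lambda>p q. snd q)"

lemma polyd_vmul: "isvar v \<Longrightarrow> polyd n F \<Longrightarrow> polyd (Suc n) (\<lambda>p q. v p q * F p q)"
  unfolding isvar_def by (auto intro: polyd.intros)

lemma polyd_lin: "polyd n A \<Longrightarrow> polyd n B \<Longrightarrow> polyd n (\<lambda>p q. a * A p q + b * B p q)"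
  by (intro polyd.add polyd.smult)

lemma polyd_D1: "polyd n F \<Longrightarrow> isvar v \<Longrightarrow> polyd n (\<lambda>p q. v p q * (F (fst p, snd p - t) q - F p q))"
proof (induction arbitrary: v rule: polyd.induct)
  case (const n c)
  then show ?case using polyd.const[of n 0] by simp
next
  case (add n F G)
  show ?case
    by (rule polyd_cong[OF polyd.add[OF add.IH(1)[OF add.prems] add.IH(2)[OF add.prems]]])
       (simp add: algebra_simps)
next
  case (smult n F c)
  show ?case
    by (rule polyd_cong[OF polyd.smult[OF smult.IH[OF smult.prems], of c]])
       (simp add: algebra_simps)
next
  case (x1 n F)
  show ?case
    by (rule polyd_cong[OF polyd.x1[OF x1.IH[OF x1.prems]]]) (simp add: algebra_simps)
next
  case (x2 n F)
  show ?case
    by (rule polyd_cong[OF polyd.x2[OF x2.IH[OF x2.prems]]]) (simp add: algebra_simps)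
next
  case (y2 n F)
  show ?case
    by (rule polyd_cong[OF polyd.y2[OF y2.IH[OF y2.prems]]]) (simp add: algebra_simps)
next
  case (y1 n F)
  have vm: "polyd (Suc n) (\<lambda>p q. v p q * F (fst p - 0, snd p - t) q)"
    by (rule polyd_vmul[OF y1.prems polyd_shift1[OF y1.hyps]])
  show ?case
    by (rule polyd_cong[OF polyd_lin[OF polyd.y1[OF y1.IH[OF y1.prems]] vm, where a=1 and b="-t"]]) (simp add: algebra_simps)
next
  case (up n F)
  then show ?case by (auto intro: polyd.up)
qed

lemma polyd_D2: "polyd n F \<Longrightarrow> isvar v \<Longrightarrow> polyd n (\<lambda>p q. v p q * (F p (fst q, snd q - t) - F p q))"
proof (induction arbitrary: v rule: polyd.induct)
  case (const n c)
  then show ?case using polyd.const[of n 0] by simp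
next
  case (add n F G)
  show ?case
    by (rule polyd_cong[OF polyd.add[OF add.IH(1)[OF add.prems] add.IH(2)[OF add.prems]]])
       (simp add: algebra_simps)
next
  case (smult n F c)
  show ?case
    by (rule polyd_cong[OF polyd.smult[OF smult.IH[OF smult.prems], of c]])
       (simp add: algebra_simps)
next
  case (x1 n F)
  show ?case
    by (rule polyd_cong[OF polyd.x1[OF x1.IH[OF x1.prems]]]) (simp add: algebra_simps)
next
  case (x2 n F)
  show ?case
    by (rule polyd_cong[OF polyd.x2[OF x2.IH[OF x2.prems]]]) (simp add: algebra_simps)
next
  case (y1 n F)
  show ?case
    by (rule polyd_cong[OF polyd.y1[OF y1.IH[OF y1.prems]]]) (simp add: algebra_simps)
next
  case (y2 n F)
  have vm: "polyd (Suc n) (\<lambda>p q. v p q * F p (fst q - 0, snd q - t))"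
    by (rule polyd_vmul[OF y2.prems polyd_shift2[OF y2.hyps]])
  show ?case
    by (rule polyd_cong[OF polyd_lin[OF polyd.y2[OF y2.IH[OF y2.prems]] vm, where a=1 and b="-t"]]) (simp add: algebra_simps)
next
  case (up n F)
  then show ?case by (auto intro: polyd.up)
qed

lemma act_L: "tensor_act l1 e1 s1 l2 e2 s2 (L m) F = (\<lambda>p q.
   l1 powi m * (snd p - of_int m * fst p + of_int m * e1) * F (fst p, snd p - of_int m) q
 + l2 powi m * (snd q - of_int m * fst q + of_int m * e2) * F p (fst q, snd q - of_int m))"
  by (simp add: tensor_act_def split_beta)

lemma act_H: "tensor_act l1 e1 s1 l2 e2 s2 (H m) F = (\<lambda>p q.
   l1 powi m * fst p * F (fst p, snd p - of_int m) q
 + l2 powi m * fst q * F p (fst q, snd q - of_int m))"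
  by (simp add: tensor_act_def split_beta)

lemma act_I: "tensor_act l1 e1 s1 l2 e2 s2 (I m) F = (\<lambda>p q.
   l1 powi m * s1 * F (fst p - 1, snd p - of_int m) q
 + l2 powi m * s2 * F p (fst q - 1, snd q - of_int m))"
  by (simp add: tensor_act_def split_beta)

lemma act_J: "tensor_act l1 e1 s1 l2 e2 s2 (J m) F = (\<lambda>p q. 0)"
  by (simp add: tensor_act_def)


lemma polyd_mult: "polyd n F \<Longrightarrow> polyd m G \<Longrightarrow> polyd (n + m) (\<lambda>p q. F p q * G p q)"
proof (induction rule: polyd.induct)
  case (const n c)
  show ?case by (rule polyd_mono[OF polyd.smult[OF const, of c]]) simp
next
  case (add n F1 F2)
  show ?case by (rule polyd_cong[OF polyd.add[OF add.IH(1)[OF add.prems] add.IH(2)[OF add.prems]]]) (simp add: algebra_simps)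
next
  case (smult n F c)
  show ?case by (rule polyd_cong[OF polyd.smult[OF smult.IH[OF smult.prems], of c]]) (simp add: algebra_simps)
next
  case (x1 n F)
  show ?case using polyd_cong[OF polyd.x1[OF x1.IH[OF x1.prems]], of "\<lambda>p q. fst p * F p q * G p q"] by (simp add: mult.assoc)
next
  case (y1 n F)
  show ?case using polyd_cong[OF polyd.y1[OF y1.IH[OF y1.prems]], of "\<lambda>p q. snd p * F p q * G p q"] by (simp add: mult.assoc)
next
  case (x2 n F)
  show ?case using polyd_cong[OF polyd.x2[OF x2.IH[OF x2.prems]], of "\<lambda>p q. fst q * F p q * G p q"] by (simp add: mult.assoc)
next
  case (y2 n F)
  show ?case using polyd_cong[OF polyd.y2[OF y2.IH[OF y2.prems]], of "\<lambda>p q. snd q * F p q * G p q"] by (simp add: mult.assoc)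
next
  case (up n F)
  show ?case using polyd.up[OF up.IH[OF up.prems]] by simp
qed

lemma polyd_act: "polyd n F \<Longrightarrow> polyd (Suc n) (tensor_act l1 e1 s1 l2 e2 s2 x F)"
proof (cases x)
  case (L m)
  assume F: "polyd n F"
  have sh1: "polyd n (\<lambda>p q. F (fst p - 0, snd p - of_int m) q)" by (rule polyd_shift1[OF F])
  have sh2: "polyd n (\<lambda>p q. F p (fst q - 0, snd q - of_int m))" by (rule polyd_shift2[OF F])
  have P1: "polyd (Suc n) (\<lambda>p q. 1 * (snd p * F (fst p - 0, snd p - of_int m) q) + 1 * ((- of_int m) * (fst p * F (fst p - 0, snd p - of_int m) q) + (of_int m * e1) * F (fst p - 0, snd p - of_int m) q))"
    by (rule polyd_lin[OF polyd.y1[OF sh1] polyd_lin[OF polyd.x1[OF sh1] polyd.up[OF sh1]]])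
  have P2: "polyd (Suc n) (\<lambda>p q. 1 * (snd q * F p (fst q - 0, snd q - of_int m)) + 1 * ((- of_int m) * (fst q * F p (fst q - 0, snd q - of_int m)) + (of_int m * e2) * F p (fst q - 0, snd q - of_int m)))"
    by (rule polyd_lin[OF polyd.y2[OF sh2] polyd_lin[OF polyd.x2[OF sh2] polyd.up[OF sh2]]])
  show ?thesis unfolding L act_L
    by (rule polyd_cong[OF polyd_lin[OF P1 P2, where a="l1 powi m" and b="l2 powi m"]]) (simp add: algebra_simps)
next
  case (H m)
  assume F: "polyd n F"
  have sh1: "polyd n (\<lambda>p q. F (fst p - 0, snd p - of_int m) q)" by (rule polyd_shift1[OF F])
  have sh2: "polyd n (\<lambda>p q. F p (fst q - 0, snd q - of_int m))" by (rule polyd_shift2[OF F])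
  show ?thesis unfolding H act_H
    by (rule polyd_cong[OF polyd_lin[OF polyd.x1[OF sh1] polyd.x2[OF sh2], where a="l1 powi m" and b="l2 powi m"]]) (simp add: algebra_simps)
next
  case (I m)
  assume F: "polyd n F"
  have sh1: "polyd n (\<lambda>p q. F (fst p - 1, snd p - of_int m) q)" by (rule polyd_shift1[OF F])
  have sh2: "polyd n (\<lambda>p q. F p (fst q - 1, snd q - of_int m))" by (rule polyd_shift2[OF F])
  show ?thesis unfolding I act_I
    by (rule polyd_cong[OF polyd.up[OF polyd_lin[OF sh1 sh2, where a="l1 powi m * s1" and b="l2 powi m * s2"]]]) (simp add: algebra_simps)
next
  case (J m)
  show ?thesis unfolding J act_J by (rule polyd.const)
qed

lemma gen_polyd: "G \<in> gen_submodule (tensor_act l1 e1 s1 l2 e2 s2) (\<lambda>p q. 1) \<Longrightarrow> \<exists>n. polyd n G"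
proof (induction rule: gen_submodule.induct)
  case base
  then show ?case using polyd.const by blast
next
  case zero
  then show ?case using polyd.const by blast
next
  case (add a b)
  then obtain n m where "polyd n a" "polyd m b" by blast
  then have "polyd (max n m) a" "polyd (max n m) b" by (auto intro: polyd_mono)
  then show ?case by (blast intro: polyd.add)
next
  case (smult a c)
  then show ?case by (blast intro: polyd.smult)
next
  case (act a x)
  then show ?case by (blast intro: polyd_act)
qed

lemma Pany_sum: "finite A \<Longrightarrow> (\<forall>i\<in>A. \<exists>n. polyd n (h i)) \<Longrightarrow> \<exists>n. polyd n (\<lambda>p q. \<Sum>i\<in>A. h i p q)"
proof (induction rule: finite_induct)
  case empty
  then show ?case using polyd.const[of 0 0] by auto
next
  case (insert x F)
  then obtain n m where "polyd n (h x)" "polyd m (\<lambda>p q. \<Sum>i\<in>F. h i p q)" by auto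
  then have "polyd (max n m) (h x)" "polyd (max n m) (\<lambda>p q. \<Sum>i\<in>F. h i p q)" by (auto intro: polyd_mono)
  from polyd.add[OF this] show ?case using insert by auto
qed

lemma pow_x1: "polyd k (\<lambda>p q. fst p ^ k)"
  by (induction k) (auto intro: polyd_cong[OF polyd.const] polyd_cong[OF polyd.x1])
lemma pow_y1: "polyd k (\<lambda>p q. snd p ^ k)"
  by (induction k) (auto intro: polyd_cong[OF polyd.const] polyd_cong[OF polyd.y1])
lemma pow_x2: "polyd k (\<lambda>p q. fst q ^ k)"
  by (induction k) (auto intro: polyd_cong[OF polyd.const] polyd_cong[OF polyd.x2])
lemma pow_y2: "polyd k (\<lambda>p q. snd q ^ k)"
  by (induction k) (auto intro: polyd_cong[OF polyd.const] polyd_cong[OF polyd.y2])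

lemma poly2_P1: "poly2 f \<Longrightarrow> \<exists>n. polyd n (\<lambda>p q. f p)"
proof -
  assume "poly2 f"
  then obtain N c where f: "f = (\<lambda>(x,y). \<Sum>i\<le>(N::nat). \<Sum>j\<le>N. c i j * x ^ i * y ^ j)" unfolding poly2_def by blast
  have "\<exists>n. polyd n (\<lambda>p q. \<Sum>i\<le>N. \<Sum>j\<le>N. c i j * fst p ^ i * snd p ^ j)"
    by (intro Pany_sum ballI finite_atMost) (blast intro: polyd_mult[OF polyd.smult[OF pow_x1] pow_y1])
  then show ?thesis by (simp add: f split_beta)
qed

lemma poly2_P2: "poly2 f \<Longrightarrow> \<exists>n. polyd n (\<lambda>p q. f q)"
proof -
  assume "poly2 f"
  then obtain N c where f: "f = (\<lambda>(x,y). \<Sum>i\<le>(N::nat). \<Sum>j\<le>N. c i j * x ^ i * y ^ j)" unfolding poly2_def by blast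
  have "\<exists>n. polyd n (\<lambda>p q. \<Sum>i\<le>N. \<Sum>j\<le>N. c i j * fst q ^ i * snd q ^ j)"
    by (intro Pany_sum ballI finite_atMost) (blast intro: polyd_mult[OF polyd.smult[OF pow_x2] pow_y2])
  then show ?thesis by (simp add: f split_beta)
qed

lemma ts_polyd: "F \<in> tensor_space \<Longrightarrow> \<exists>n. polyd n F"
proof -
  assume "F \<in> tensor_space"
  then obtain n f g where 1: "\<forall>i<(n::nat). poly2 (f i) \<and> poly2 (g i)" "F = (\<lambda>p q. \<Sum>i<n. f i p * g i q)"
    by (rule ts_elim)
  have "\<exists>k. polyd k (\<lambda>p q. \<Sum>i<n. f i p * g i q)"
  proof (intro Pany_sum ballI finite_lessThan)
    fix i assume "i \<in> {..<n}"
    then obtain a b where "polyd a (\<lambda>p q. f i p)" "polyd b (\<lambda>p q. g i q)" using 1 poly2_P1 poly2_P2 by blast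
    from polyd_mult[OF this] show "\<exists>k. polyd k (\<lambda>p q. f i p * g i q)" by blast
  qed
  then show ?thesis using 1 by simp
qed


lemma S_cong: "a \<in> gen_submodule act v \<Longrightarrow> (\<And>p q. b p q = a p q) \<Longrightarrow> b \<in> gen_submodule act v"
proof -
  assume "a \<in> gen_submodule act v" "\<And>p q. b p q = a p q"
  then have "b = a" by (intro ext) auto
  then show ?thesis using \<open>a \<in> gen_submodule act v\<close> by simp
qed

lemma S_lin: "a \<in> gen_submodule act v \<Longrightarrow> b \<in> gen_submodule act v \<Longrightarrow>
   (\<lambda>p q. x * a p q + y * b p q) \<in> gen_submodule act v"
  by (intro gen_submodule.add gen_submodule.smult)

context
  fixes l1 l2 s1 s2 e1 e2 :: complex
  assumes neq: "l1 \<noteq> l2"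
begin

abbreviation "SS \<equiv> gen_submodule (tensor_act l1 e1 s1 l2 e2 s2) (\<lambda>p q. 1)"

lemma xstep:
  assumes IH: "\<And>G. polyd n G \<Longrightarrow> G \<in> SS" and F: "polyd n F"
  shows "(\<lambda>p q. fst p * F p q) \<in> SS \<and> (\<lambda>p q. fst q * F p q) \<in> SS"
proof -
  have FS: "F \<in> SS" by (rule IH[OF F])
  have B0: "(\<lambda>p q. fst p * F p q + fst q * F p q) \<in> SS"
    by (rule S_cong[OF gen_submodule.act[OF FS, of "H 0"]]) (simp add: act_H)
  have R: "polyd n (\<lambda>p q. l1 * (fst p * (F (fst p, snd p - 1) q - F p q)) + l2 * (fst q * (F p (fst q, snd q - 1) - F p q)))"
    by (rule polyd_lin[OF polyd_D1[OF F] polyd_D2[OF F]]) (auto simp: isvar_def)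
  have B1: "(\<lambda>p q. l1 * (fst p * F p q) + l2 * (fst q * F p q)) \<in> SS"
    by (rule S_cong[OF S_lin[OF gen_submodule.act[OF FS, of "H 1"] IH[OF R], where x=1 and y="-1"]])
       (simp add: act_H algebra_simps)
  have d: "l1 - l2 \<noteq> 0" using neq by simp
  have k1: "(1/(l1-l2)) * (l1*u + l2*w) + (-l2/(l1-l2)) * (u + w) = u" for u w :: complex
  proof -
    have "(1/(l1-l2)) * (l1*u + l2*w) + (-l2/(l1-l2)) * (u + w) = ((l1 - l2) * u) / (l1 - l2)"
      by (simp add: divide_inverse algebra_simps)
    also have "\<dots> = u" using d by simp
    finally show ?thesis .
  qed
  have k2: "(1/(l2-l1)) * (l1*u + l2*w) + (-l1/(l2-l1)) * (u + w) = w" for u w :: complex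
  proof -
    have "(1/(l2-l1)) * (l1*u + l2*w) + (-l1/(l2-l1)) * (u + w) = ((l2 - l1) * w) / (l2 - l1)"
      by (simp add: divide_inverse algebra_simps)
    also have "\<dots> = w" using d by simp
    finally show ?thesis .
  qed
  have X1: "(\<lambda>p q. fst p * F p q) \<in> SS"
    by (rule S_cong[OF S_lin[OF B1 B0, where x="1/(l1-l2)" and y="-l2/(l1-l2)"]]) (simp only: k1)
  have X2: "(\<lambda>p q. fst q * F p q) \<in> SS"
    by (rule S_cong[OF S_lin[OF B1 B0, where x="1/(l2-l1)" and y="-l1/(l2-l1)"]]) (simp only: k2)
  show ?thesis using X1 X2 by blast
qed

lemma sep:
  assumes B0: "(\<lambda>p q. U p q + W p q) \<in> SS" and B1: "(\<lambda>p q. l1 * U p q + l2 * W p q) \<in> SS"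
  shows "U \<in> SS \<and> W \<in> SS"
proof -
  have d: "l1 - l2 \<noteq> 0" using neq by simp
  have k1: "(1/(l1-l2)) * (l1*u + l2*w) + (-l2/(l1-l2)) * (u + w) = u" for u w :: complex
  proof -
    have "(1/(l1-l2)) * (l1*u + l2*w) + (-l2/(l1-l2)) * (u + w) = ((l1 - l2) * u) / (l1 - l2)"
      by (simp add: divide_inverse algebra_simps)
    also have "\<dots> = u" using d by simp
    finally show ?thesis .
  qed
  have k2: "(1/(l2-l1)) * (l1*u + l2*w) + (-l1/(l2-l1)) * (u + w) = w" for u w :: complex
  proof -
    have "(1/(l2-l1)) * (l1*u + l2*w) + (-l1/(l2-l1)) * (u + w) = ((l2 - l1) * w) / (l2 - l1)"
      by (simp add: divide_inverse algebra_simps)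
    also have "\<dots> = w" using d by simp
    finally show ?thesis .
  qed
  have X1: "U \<in> SS"
    by (rule S_cong[OF S_lin[OF B1 B0, where x="1/(l1-l2)" and y="-l2/(l1-l2)"]]) (simp only: k1)
  have X2: "W \<in> SS"
    by (rule S_cong[OF S_lin[OF B1 B0, where x="1/(l2-l1)" and y="-l1/(l2-l1)"]]) (simp only: k2)
  show ?thesis using X1 X2 by blast
qed

lemma polyd_D1c: "polyd n F \<Longrightarrow> polyd n (\<lambda>p q. F (fst p, snd p - t) q - F p q)"
  by (rule polyd_cong[OF polyd_lin[OF polyd_shift1[of n F 0 t] , where a=1 and b="-1"]]) auto

lemma polyd_D2c: "polyd n F \<Longrightarrow> polyd n (\<lambda>p q. F p (fst q, snd q - t) - F p q)"
  by (rule polyd_cong[OF polyd_lin[OF polyd_shift2[of n F 0 t] , where a=1 and b="-1"]]) auto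

lemma ystep:
  assumes IH: "\<And>G. polyd n G \<Longrightarrow> G \<in> SS" and F: "polyd n F"
  shows "(\<lambda>p q. snd p * F p q) \<in> SS \<and> (\<lambda>p q. snd q * F p q) \<in> SS"
proof -
  have FS: "F \<in> SS" by (rule IH[OF F])
  have X1: "(\<lambda>p q. fst p * F p q) \<in> SS" and X2: "(\<lambda>p q. fst q * F p q) \<in> SS"
    using xstep[OF IH F] by auto
  have C0: "(\<lambda>p q. snd p * F p q + snd q * F p q) \<in> SS"
    by (rule S_cong[OF gen_submodule.act[OF FS, of "L 0"]]) (simp add: act_L)
  have R1: "polyd n (\<lambda>p q. 1 * (snd p * (F (fst p, snd p - 1) q - F p q)) + 1 * ((-1) * (fst p * (F (fst p, snd p - 1) q - F p q)) + e1 * (F (fst p, snd p - 1) q - F p q)))"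
    by (rule polyd_lin[OF polyd_D1[OF F] polyd_lin[OF polyd_D1[OF F] polyd_D1c[OF F]]]) (auto simp: isvar_def)
  have R2: "polyd n (\<lambda>p q. 1 * (snd q * (F p (fst q, snd q - 1) - F p q)) + 1 * ((-1) * (fst q * (F p (fst q, snd q - 1) - F p q)) + e2 * (F p (fst q, snd q - 1) - F p q)))"
    by (rule polyd_lin[OF polyd_D2[OF F] polyd_lin[OF polyd_D2[OF F] polyd_D2c[OF F]]]) (auto simp: isvar_def)
  have R: "polyd n (\<lambda>p q. l1 * (snd p * (F (fst p, snd p - 1) q - F p q) - (fst p * (F (fst p, snd p - 1) q - F p q)) + e1 * (F (fst p, snd p - 1) q - F p q))
      + l2 * (snd q * (F p (fst q, snd q - 1) - F p q) - (fst q * (F p (fst q, snd q - 1) - F p q)) + e2 * (F p (fst q, snd q - 1) - F p q)))"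
    by (rule polyd_cong[OF polyd_lin[OF R1 R2, where a=l1 and b=l2]]) (simp add: algebra_simps)
  have C1: "(\<lambda>p q. l1 * ((snd p - fst p + e1) * F p q) + l2 * ((snd q - fst q + e2) * F p q)) \<in> SS"
    by (rule S_cong[OF S_lin[OF gen_submodule.act[OF FS, of "L 1"] IH[OF R], where x=1 and y="-1"]])
       (simp add: act_L algebra_simps)
  have T1: "(\<lambda>p q. l1 * (fst p * F p q) + l2 * (fst q * F p q)) \<in> SS"
    by (rule S_lin[OF X1 X2])
  have T2: "(\<lambda>p q. 1 * (l1 * ((snd p - fst p + e1) * F p q) + l2 * ((snd q - fst q + e2) * F p q)) + 1 * (l1 * (fst p * F p q) + l2 * (fst q * F p q))) \<in> SS"
    by (rule S_lin[OF C1 T1])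
  have C1': "(\<lambda>p q. l1 * (snd p * F p q) + l2 * (snd q * F p q)) \<in> SS"
    by (rule S_cong[OF S_lin[OF T2 FS, where x=1 and y="-(l1*e1 + l2*e2)"]]) (simp add: algebra_simps)
  show ?thesis using sep[OF C0 C1'] .
qed

lemma all_in_S: "polyd n G \<Longrightarrow> G \<in> SS"
proof (induction n arbitrary: G)
  case 0
  have "polyd m G \<Longrightarrow> m = 0 \<Longrightarrow> G \<in> SS" for m G
  proof (induction rule: polyd.induct)
    case (const n c)
    show ?case by (rule S_cong[OF gen_submodule.smult[OF gen_submodule.base, of c]]) simp
  qed (auto intro: gen_submodule.add gen_submodule.smult)
  then show ?case using 0 by blast
next
  case (Suc n)
  have "polyd m G \<Longrightarrow> m = Suc n \<Longrightarrow> G \<in> SS" for m G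
  proof (induction rule: polyd.induct)
    case (const n c)
    show ?case by (rule S_cong[OF gen_submodule.smult[OF gen_submodule.base, of c]]) simp
  next
    case (x1 k F) then show ?case using xstep[OF Suc.IH, where F=F] by auto
  next
    case (x2 k F) then show ?case using xstep[OF Suc.IH, where F=F] by auto
  next
    case (y1 k F) then show ?case using ystep[OF Suc.IH, where F=F] by auto
  next
    case (y2 k F) then show ?case using ystep[OF Suc.IH, where F=F] by auto
  next
    case (up k F) then show ?case using Suc.IH by auto
  qed (auto intro: gen_submodule.add gen_submodule.smult)
  then show ?case using Suc.prems by blast
qed

end


theorem proposition4p3:
  fixes l1 l2 s1 s2 e1 e2 :: complex
  assumes "l1 \<noteq> 0" and "l2 \<noteq> 0" and "s1 \<noteq> 0" and "s2 \<noteq> 0" and "l1 \<noteq> l2"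
  shows "gen_submodule (tensor_act l1 e1 s1 l2 e2 s2) (\<lambda>p q. 1) = tensor_space"
proof
  show "gen_submodule (tensor_act l1 e1 s1 l2 e2 s2) (\<lambda>p q. 1) \<subseteq> tensor_space"
    using gen_polyd polyd_ts by blast
  show "tensor_space \<subseteq> gen_submodule (tensor_act l1 e1 s1 l2 e2 s2) (\<lambda>p q. 1)"
    using ts_polyd all_in_S[OF assms(5)] by blast
qed

end
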